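(* Let $\mathcal N$ be a single-mode phase-insensitive $s$-sender bosonic Gaussian multiple-access channel that is global covariant ($\delta_k=0$ for all $k$) or global contravariant ($\delta_k=1$ for all $k$). Then $\mathcal N=\Psi\circ\mathcal B$, where $\mathcal B$ is a passive linear-optical (beamsplitter) map taking the $s$ input modes to the single mode $\hat a_{\rm mix}=\sum_k v_k\hat a_{A_k}$ for a unit vector $v\in\mathbb C^s$ (discarding the other output ports), and $\Psi$ is a single-mode phase-insensitive bosonic Gaussian channel that is covariant in the global covariant case and contravariant in the global contravariant case.
   Context: Single-mode phase-insensitive bosonic Gaussian MAC: sender $k$ controls one mode $A_k$; the output is $\hat a_B=\sum_{k=1}^sw_k((1-\delta_k)\hat a_{A_k}+\delta_k\hat a^\dagger_{A_k})+u_1\hat a_{E',1}+u_2\hat a^\dagger_{E',2}$ with $w_k\in\mathbb C$, $\delta_k\in\{0,1\}$, $u_1,u_2\ge0$, environment modes in vacuum, $\sum_k(1-2\delta_k)|w_k|^2+u_1^2-u_2^2=1$. A single-mode phase-insensitive bosonic Gaussian channel is $\hat a_{\rm out}=w((1-\delta)\hat a_{\rm in}+\delta\hat a^\dagger_{\rm in})+u_1\hat e_1+u_2\hat e_2^\dagger$ with vacuum environment modes and $(1-2\delta)|w|^2+u_1^2-u_2^2=1$; covariant if $\delta=0$, contravariant if $\delta=1$. *)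

theory Defs
  imports Complex_Main
begin

text \<open>Heisenberg-picture model. A mode-linear operator expression is a finite formal
linear combination of annihilation and creation operators of the modes involved:
coefficient X m False of the annihilation operator of mode m, coefficient X m True
of its creation operator. Modes: In k is the input mode A_k of sender k (k < s),
Env j is an environment mode (vacuum) E'_j.\<close>

datatype mode = In nat | Env nat

type_synonym opexpr = "mode \<Rightarrow> bool \<Rightarrow> complex"

definition lc_add :: "opexpr \<Rightarrow> opexpr \<Rightarrow> opexpr" where
  "lc_add X Y = (\<lambda>m d. X m d + Y m d)"

definition lc_scale :: "complex \<Rightarrow> opexpr \<Rightarrow> opexpr" where
  "lc_scale c X = (\<lambda>m d. c * X m d)"

definition lc_sum :: "nat set \<Rightarrow> (nat \<Rightarrow> opexpr) \<Rightarrow> opexpr" where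
  "lc_sum A F = (\<lambda>m d. \<Sum>k\<in>A. F k m d)"

definition adj :: "opexpr \<Rightarrow> opexpr" where
  "adj X = (\<lambda>m d. cnj (X m (\<not> d)))"

definition ann :: "mode \<Rightarrow> opexpr" where
  "ann m = (\<lambda>m' d. if m' = m \<and> \<not> d then 1 else 0)"

definition cre :: "mode \<Rightarrow> opexpr" where
  "cre m = adj (ann m)"

definition mac_out :: "nat \<Rightarrow> (nat \<Rightarrow> complex) \<Rightarrow> (nat \<Rightarrow> bool) \<Rightarrow> real \<Rightarrow> real \<Rightarrow> opexpr" where
  "mac_out s w \<delta> u1 u2 =
     lc_add (lc_sum {..<s} (\<lambda>k. lc_scale (w k)
               (lc_add (lc_scale (1 - of_bool (\<delta> k)) (ann (In k)))
                       (lc_scale (of_bool (\<delta> k)) (cre (In k))))))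
            (lc_add (lc_scale (complex_of_real u1) (ann (Env 1)))
                    (lc_scale (complex_of_real u2) (cre (Env 2))))"

definition mac_valid :: "nat \<Rightarrow> (nat \<Rightarrow> complex) \<Rightarrow> (nat \<Rightarrow> bool) \<Rightarrow> real \<Rightarrow> real \<Rightarrow> bool" where
  "mac_valid s w \<delta> u1 u2 \<longleftrightarrow> u1 \<ge> 0 \<and> u2 \<ge> 0 \<and>
     (\<Sum>k<s. (1 - 2 * of_bool (\<delta> k)) * (cmod (w k))\<^sup>2) + u1\<^sup>2 - u2\<^sup>2 = 1"

text \<open>Single-mode phase-insensitive Gaussian channel Psi applied (Heisenberg picture)
to an input mode whose annihilation operator is the expression X:
  a_out = w ((1-delta) X + delta X^dagger) + u1 e1 + u2 e2^dagger,
with its vacuum environment modes e1, e2 taken to be Env 1, Env 2.\<close>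
definition sm_out :: "complex \<Rightarrow> bool \<Rightarrow> real \<Rightarrow> real \<Rightarrow> opexpr \<Rightarrow> opexpr" where
  "sm_out w \<delta> u1 u2 X =
     lc_add (lc_scale w (lc_add (lc_scale (1 - of_bool \<delta>) X) (lc_scale (of_bool \<delta>) (adj X))))
            (lc_add (lc_scale (complex_of_real u1) (ann (Env 1)))
                    (lc_scale (complex_of_real u2) (cre (Env 2))))"

definition sm_valid :: "complex \<Rightarrow> bool \<Rightarrow> real \<Rightarrow> real \<Rightarrow> bool" where
  "sm_valid w \<delta> u1 u2 \<longleftrightarrow> u1 \<ge> 0 \<and> u2 \<ge> 0 \<and>
     (1 - 2 * of_bool \<delta>) * (cmod w)\<^sup>2 + u1\<^sup>2 - u2\<^sup>2 = 1"

definition mix :: "nat \<Rightarrow> (nat \<Rightarrow> complex) \<Rightarrow> opexpr" where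
  "mix s v = lc_sum {..<s} (\<lambda>k. lc_scale (v k) (ann (In k)))"

definition unit_vec :: "nat \<Rightarrow> (nat \<Rightarrow> complex) \<Rightarrow> bool" where
  "unit_vec s v \<longleftrightarrow> (\<Sum>k<s. (cmod (v k))\<^sup>2) = 1"

end

theory Submission
  imports Defs
begin

lemma key_eq:
  assumes "\<forall>k<s. c * v k = w k"
  shows "(\<Sum>k<s. w k * f k) = c * (\<Sum>k<s. v k * (f k::complex))"
proof -
  have "(\<Sum>k<s. w k * f k) = (\<Sum>k<s. c * (v k * f k))"
  proof (rule sum.cong)
    fix x assume "x \<in> {..<s}"
    then have "c * v x = w x" using assms by simp
    then show "w x * f x = c * (v x * f x)" by (simp add: mult.assoc[symmetric])
  qed simp
  then show ?thesis by (simp add: sum_distrib_left)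
qed

lemma lc_sum_cong: "(\<And>k. k \<in> A \<Longrightarrow> F k = G k) \<Longrightarrow> lc_sum A F = lc_sum A G"
  unfolding lc_sum_def by (intro ext sum.cong) auto

lemma lc_scale_sum: "lc_scale c (lc_sum A F) = lc_sum A (\<lambda>k. lc_scale c (F k))"
  unfolding lc_sum_def lc_scale_def by (intro ext) (simp add: sum_distrib_left)

lemma lc_scale_scale: "lc_scale c (lc_scale d X) = lc_scale (c * d) X"
  unfolding lc_scale_def by (intro ext) (simp add: mult.assoc)

lemma lc_cov: "lc_add (lc_scale 1 X) (lc_scale 0 Y) = X"
  unfolding lc_add_def lc_scale_def by simp

lemma lc_con: "lc_add (lc_scale 0 X) (lc_scale 1 Y) = Y"
  unfolding lc_add_def lc_scale_def by simp

lemma lc_one: "lc_scale 1 X = X"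
  unfolding lc_scale_def by simp

lemma lc_zr: "lc_add X (lc_scale 0 Y) = X"
  unfolding lc_add_def lc_scale_def by simp

lemma lc_zl: "lc_add (lc_scale 0 X) Y = Y"
  unfolding lc_add_def lc_scale_def by simp

lemma lc_zsl: "lc_add (lc_sum A (\<lambda>k. lc_scale 0 (F k))) Y = Y"
  unfolding lc_add_def lc_scale_def lc_sum_def by simp

lemma adj_sum: "adj (lc_sum A F) = lc_sum A (\<lambda>k. adj (F k))"
  unfolding adj_def lc_sum_def by (intro ext) simp

lemma adj_scale: "adj (lc_scale c X) = lc_scale (cnj c) (adj X)"
  unfolding adj_def lc_scale_def by (intro ext) simp

theorem lemma1:
  fixes s :: nat and w :: "nat \<Rightarrow> complex" and \<delta> :: "nat \<Rightarrow> bool" and u1 u2 :: real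
  assumes "s \<ge> 1"
    and "mac_valid s w \<delta> u1 u2"
    and "(\<forall>k<s. \<not> \<delta> k) \<or> (\<forall>k<s. \<delta> k)"
  shows "\<exists>v w' \<delta>' u1' u2'. unit_vec s v \<and> sm_valid w' \<delta>' u1' u2'
           \<and> ((\<forall>k<s. \<not> \<delta> k) \<longrightarrow> \<not> \<delta>') \<and> ((\<forall>k<s. \<delta> k) \<longrightarrow> \<delta>')
           \<and> mac_out s w \<delta> u1 u2 = sm_out w' \<delta>' u1' u2' (mix s v)"
proof -
  define S where "S = (\<Sum>k<s. (cmod (w k))\<^sup>2)"
  define N where "N = sqrt S"
  have S0: "S \<ge> 0" unfolding S_def by (simp add: sum_nonneg)
  have NN: "N\<^sup>2 = S" unfolding N_def using S0 by (simp only: real_sqrt_pow2)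
  have N0: "N \<ge> 0" unfolding N_def using S0 by simp
  have zero: "\<forall>k<s. w k = 0" if "N = 0"
  proof -
    have "S = 0" using NN that by simp
    then have "\<forall>k\<in>{..<s}. (cmod (w k))\<^sup>2 = 0" unfolding S_def
      by (subst sum_nonneg_eq_0_iff[symmetric]) auto
    then show ?thesis by simp
  qed
  define e :: "nat \<Rightarrow> complex" where "e = (\<lambda>k. if k = 0 then 1 else 0)"
  have ue: "unit_vec s e"
  proof -
    have "(\<Sum>k<s. (cmod (e k))\<^sup>2) = (\<Sum>k<s. if k = 0 then 1 else 0)"
      unfolding e_def by (intro sum.cong) auto
    then show ?thesis unfolding unit_vec_def using assms(1) by simp
  qed
  have unitg: "unit_vec s (\<lambda>k. g (w k) / complex_of_real N)"
    if "N \<noteq> 0" "\<And>z. cmod (g z) = cmod z" for g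
  proof -
    have "(\<Sum>k<s. (cmod (g (w k) / complex_of_real N))\<^sup>2) = (\<Sum>k<s. (cmod (w k))\<^sup>2 / N\<^sup>2)"
      using that N0 by (simp add: norm_divide power_divide)
    also have "\<dots> = S / N\<^sup>2" unfolding S_def by (simp add: sum_divide_distrib)
    also have "\<dots> = 1" using NN that by (metis divide_self power_not_zero)
    finally show ?thesis unfolding unit_vec_def .
  qed
  have ex: "\<exists>k. k < s" using assms(1) by (intro exI[of _ 0]) simp
  show ?thesis
    using assms(3)
  proof
    assume cov: "\<forall>k<s. \<not> \<delta> k"
    define v where "v = (if N = 0 then e else (\<lambda>k. w k / complex_of_real N))"
    have uv: "unit_vec s v" unfolding v_def using ue unitg[of id] by (cases "N = 0") simp_all
    have cv: "\<forall>k<s. complex_of_real N * v k = w k"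
      unfolding v_def using zero by auto
    have sv: "sm_valid (complex_of_real N) False u1 u2"
      using assms(2) cov NN unfolding sm_valid_def mac_valid_def S_def by simp
    have eq: "mac_out s w \<delta> u1 u2 = sm_out (complex_of_real N) False u1 u2 (mix s v)"
    proof -
      have "sm_out (complex_of_real N) False u1 u2 (mix s v) =
        lc_add (lc_sum {..<s} (\<lambda>k. lc_scale (complex_of_real N * v k) (ann (In k))))
            (lc_add (lc_scale (complex_of_real u1) (ann (Env 1)))
                    (lc_scale (complex_of_real u2) (cre (Env 2))))"
        unfolding sm_out_def mix_def by (simp add: lc_one lc_zr lc_zl lc_scale_sum lc_scale_scale)
      also have "\<dots> = mac_out s w \<delta> u1 u2"
        unfolding mac_out_def
        by (intro arg_cong2[where f=lc_add] refl lc_sum_cong) (simp add: cv cov lc_one lc_zr lc_zl)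
      finally show ?thesis by simp
    qed
    show ?thesis
      apply (rule exI[of _ v], rule exI[of _ "complex_of_real N"], rule exI[of _ False],
             rule exI[of _ u1], rule exI[of _ u2])
      using uv sv eq cov ex by (intro conjI) auto
  next
    assume con: "\<forall>k<s. \<delta> k"
    define v where "v = (if N = 0 then e else (\<lambda>k. cnj (w k) / complex_of_real N))"
    have uv: "unit_vec s v" unfolding v_def using ue unitg[of cnj] by (cases "N = 0") simp_all
    have cv: "\<forall>k<s. complex_of_real N * cnj (v k) = w k"
      unfolding v_def using zero by auto
    have sv: "sm_valid (complex_of_real N) True u1 u2"
      using assms(2) con NN unfolding sm_valid_def mac_valid_def S_def by (simp add: sum_negf)
    have eq: "mac_out s w \<delta> u1 u2 = sm_out (complex_of_real N) True u1 u2 (mix s v)"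
    proof -
      have "sm_out (complex_of_real N) True u1 u2 (mix s v) =
        lc_add (lc_sum {..<s} (\<lambda>k. lc_scale (complex_of_real N * cnj (v k)) (cre (In k))))
            (lc_add (lc_scale (complex_of_real u1) (ann (Env 1)))
                    (lc_scale (complex_of_real u2) (cre (Env 2))))"
        unfolding sm_out_def mix_def cre_def by (simp add: lc_one lc_zr lc_zl lc_zsl lc_scale_sum lc_scale_scale adj_sum adj_scale)
      also have "\<dots> = mac_out s w \<delta> u1 u2"
        unfolding mac_out_def
        by (intro arg_cong2[where f=lc_add] refl lc_sum_cong) (simp add: cv con lc_one lc_zr lc_zl)
      finally show ?thesis by simp
    qed
    show ?thesis
      apply (rule exI[of _ v], rule exI[of _ "complex_of_real N"], rule exI[of _ True],
             rule exI[of _ u1], rule exI[of _ u2])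
      using uv sv eq con ex by (intro conjI) auto
  qed
qed

end
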